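(* Let $a,b,c$ be positive integers with $ab$ odd and $c$ even. Then there are infinitely many natural numbers $n$ such that $an^2+bn+c$ is a practical number.
   Context: A positive integer $N$ is called a practical number if every integer in $[1,N]$ can be expressed as a sum of distinct positive divisors of $N$. *)

theory Defs
  imports Main
begin

definition practical :: "nat \<Rightarrow> bool" where
  "practical N \<longleftrightarrow> N > 0 \<and>
     (\<forall>m \<in> {1..N}. \<exists>S. S \<subseteq> {d. d dvd N} \<and> \<Sum>S = m)"

end

theory Submission
  imports Defs "HOL-Number_Theory.Number_Theory"
begin

lemma practical_rep:
  assumes "practical N" "x \<le> N"
  shows "\<exists>S. S \<subseteq> {d. d dvd N} \<and> \<Sum>S = x"
proof (cases "x = 0")
  case True then show ?thesis by (rule_tac x="{}" in exI) auto
next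
  case False then show ?thesis using assms unfolding practical_def by auto
qed

lemma practical_mult:
  assumes P: "practical N" and m1: "1 \<le> m" and mN: "m \<le> N + 1"
  shows "practical (N * m)"
proof -
  have N0: "N > 0" using P unfolding practical_def by auto
  have "\<exists>S. S \<subseteq> {d. d dvd N * m} \<and> \<Sum>S = x" if x: "x \<in> {1..N*m}" for x
  proof -
    define q where "q = x div m"
    define r where "r = x mod m"
    have "q \<le> N" unfolding q_def using x
      by (metis atLeastAtMost_iff div_le_mono m1 nonzero_mult_div_cancel_right not_one_le_zero)
    then obtain S1 where S1: "S1 \<subseteq> {d. d dvd N}" "\<Sum>S1 = q" using practical_rep[OF P] by blast
    have "r < m" unfolding r_def using m1 by simp
    hence "r \<le> N" using mN by simp
    then obtain S2 where S2: "S2 \<subseteq> {d. d dvd N}" "\<Sum>S2 = r" using practical_rep[OF P] by blast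
    have fin: "finite {d. d dvd N}" using N0 by simp
    have f1: "finite S1" using S1 fin finite_subset by blast
    have f2: "finite S2" using S2 fin finite_subset by blast
    have disj: "(\<lambda>d. m*d) ` S1 \<inter> S2 = {}"
    proof (rule ccontr)
      assume "(\<lambda>d. m*d) ` S1 \<inter> S2 \<noteq> {}"
      then obtain e where e1: "e \<in> S1" and e2: "m*e \<in> S2" by blast
      have "e dvd N" using e1 S1 by auto
      hence "e \<ge> 1" using N0 by (metis dvd_0_left_iff less_one not_le neq0_conv)
      hence "m*e \<ge> m" by simp
      moreover have "m*e \<le> \<Sum>S2" using member_le_sum[of "m*e" S2 "\<lambda>x. x"] e2 f2 by simp
      ultimately show False using S2 \<open>r < m\<close> by linarith
    qed
    have inj: "inj_on (\<lambda>d. m*d) S1" using m1 by (auto simp: inj_on_def)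
    have "\<Sum>((\<lambda>d. m*d) ` S1 \<union> S2) = \<Sum>((\<lambda>d. m*d) ` S1) + \<Sum>S2"
      using f1 f2 disj by (simp add: sum.union_disjoint)
    also have "\<Sum>((\<lambda>d. m*d) ` S1) = m * \<Sum>S1"
      using inj by (simp add: sum.reindex sum_distrib_left)
    finally have "\<Sum>((\<lambda>d. m*d) ` S1 \<union> S2) = m*q + r" using S1 S2 by simp
    also have "\<dots> = x" unfolding q_def r_def by simp
    finally have sum: "\<Sum>((\<lambda>d. m*d) ` S1 \<union> S2) = x" .
    have "(\<lambda>d. m*d) ` S1 \<union> S2 \<subseteq> {d. d dvd N * m}"
      using S1 S2 by auto
    with sum show ?thesis by blast
  qed
  moreover have "N * m > 0" using N0 m1 by simp
  ultimately show ?thesis unfolding practical_def by blast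
qed

lemma practical_one: "practical 1"
  unfolding practical_def
  by (auto intro!: exI[of _ "{1}"])

lemma practical_pow2: "practical (2^K)"
proof (induction K)
  case 0 then show ?case using practical_one by simp
next
  case (Suc K)
  have "practical (2^K * 2)"
    by (rule practical_mult[OF Suc]) auto
  then show ?case by (simp add: mult.commute)
qed

lemma shift_poly:
  fixes a b c n x :: nat
  shows "a*(n+x)^2+b*(n+x)+c = (a*n^2+b*n+c) + x*(2*a*n+b) + a*x^2"
  by (simp add: power2_eq_square algebra_simps)

lemma hensel2:
  fixes a b c :: nat
  assumes "odd a" "odd b" "even c"
  shows "\<exists>r. 2^K dvd a*r^2+b*r+c"
proof (induction K)
  case 0 then show ?case by simp
next
  case (Suc K)
  show ?case
  proof (cases "K = 0")
    case True then show ?thesis using assms by (rule_tac x=0 in exI) simp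
  next
    case K: False
    from Suc obtain r where r: "2^K dvd a*r^2+b*r+c" by blast
    then obtain q where q: "a*r^2+b*r+c = 2^K * q" by blast
    show ?thesis
    proof (cases "even q")
      case True
      then show ?thesis using q by (rule_tac x=r in exI) auto
    next
      case False
      have e: "even (q + (2*a*r+b) + a*2^K)" using False assms K by simp
      have "a*(r+2^K)^2+b*(r+2^K)+c = 2^K * (q + (2*a*r+b) + a*2^K)"
        unfolding shift_poly q by (simp add: power2_eq_square algebra_simps)
      then show ?thesis using e by (rule_tac x="r+2^K" in exI) auto
    qed
  qed
qed

lemma aux_bound:
  fixes a b c n k :: nat
  shows "(2*a*n+b)*k+1 \<le> (a*n^2+b*n+c) + (a*k^2+b*k+1)"
proof -
  have "2*n*k \<le> n^2+k^2"
  proof -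
    have "0 \<le> (int n - int k)^2" by simp
    hence "int (2*n*k) \<le> int (n^2+k^2)"
      by (simp add: power2_eq_square algebra_simps)
    thus ?thesis by linarith
  qed
  hence "a*(2*n*k) \<le> a*(n^2+k^2)" by simp
  hence "2*a*n*k \<le> a*n^2 + a*k^2" by (simp add: algebra_simps)
  moreover have "b*k \<le> b*n + b*k" by simp
  ultimately show ?thesis by (simp add: algebra_simps)
qed

lemma step:
  fixes a b c d k n N :: nat
  assumes N_def: "N = a*n^2+b*n+c"
  assumes P: "practical (N * d)" and dN: "d dvd N" and dB: "d dvd (2*a*n+b)*k+1"
    and C0: "a*k^2+b*k+1 \<le> N" and dk: "a*k^2+2 \<le> d^2" and k0: "k > 0"
  shows "practical (a*(n+N*k)^2+b*(n+N*k)+c) \<and> d dvd (a*(n+N*k)^2+b*(n+N*k)+c)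
    \<and> d dvd (2*a*(n+N*k)+b)*k+1 \<and> N \<le> a*(n+N*k)^2+b*(n+N*k)+c \<and> n < n+N*k"
proof -
  define B where "B = 2*a*n+b"
  define g where "g = a*N*k^2 + B*k + 1"
  have "a*(n+N*k)^2+b*(n+N*k)+c = N + (N*k)*(2*a*n+b) + a*(N*k)^2" using shift_poly N_def by simp
  also have "\<dots> = N * g" unfolding g_def B_def by (simp add: power2_eq_square algebra_simps)
  finally have fn': "a*(n+N*k)^2+b*(n+N*k)+c = N * g" .
  have N0: "N > 0" using C0 by simp
  have "d dvd a*N*k^2" using dN by simp
  moreover have "g = a*N*k^2 + (B*k+1)" unfolding g_def by simp
  ultimately have dg: "d dvd g" using dB B_def by (metis dvd_add)
  then obtain h where h: "g = d * h" by blast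
  have "B*k+1 \<le> N + (a*k^2+b*k+1)" using aux_bound[of a n b k c] unfolding B_def N_def by simp
  hence "B*k+1 \<le> 2*N" using C0 by linarith
  moreover have "N*(a*k^2+2) \<le> N*d^2" using dk by (rule mult_le_mono2)
  ultimately have "g \<le> N*d^2" unfolding g_def by (simp add: algebra_simps)
  also have "\<dots> \<le> d*(N*d+1)" by (simp add: power2_eq_square algebra_simps)
  finally have "d*h \<le> d*(N*d+1)" using h by simp
  moreover have "d > 0" using dk by (cases d) auto
  ultimately have hle: "h \<le> N*d+1" using mult_le_cancel1 by blast
  have "g \<ge> 1" unfolding g_def by simp
  hence "h \<ge> 1" using h by (cases h) auto
  have "practical ((N*d)*h)" by (rule practical_mult[OF P \<open>h \<ge> 1\<close> hle])
  hence pr: "practical (a*(n+N*k)^2+b*(n+N*k)+c)" unfolding fn' h by (simp add: mult.assoc)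
  have d1: "d dvd (a*(n+N*k)^2+b*(n+N*k)+c)" unfolding fn' using dN by simp
  have "(2*a*(n+N*k)+b)*k+1 = ((2*a*n+b)*k+1) + N*(2*a*k*k)" by (simp add: algebra_simps)
  moreover have "d dvd ((2*a*n+b)*k+1) + N*(2*a*k*k)" by (rule dvd_add[OF dB dvd_mult2[OF dN]])
  ultimately have d2: "d dvd (2*a*(n+N*k)+b)*k+1" by metis
  have "N \<le> N*g" using \<open>g \<ge> 1\<close> by simp
  hence "N \<le> a*(n+N*k)^2+b*(n+N*k)+c" using fn' by simp
  moreover have "n < n+N*k" using N0 k0 by simp
  ultimately show ?thesis using pr d1 d2 by blast
qed

lemma fcong:
  fixes a b c x y M :: nat
  assumes "[x = y] (mod M)"
  shows "[a*x^2+b*x+c = a*y^2+b*y+c] (mod M)"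
  using assms by (intro cong_add cong_mult cong_pow cong_refl)

lemma lcong:
  fixes a b k x y M :: nat
  assumes "[x = y] (mod M)"
  shows "[(2*a*x+b)*k+1 = (2*a*y+b)*k+1] (mod M)"
  using assms by (intro cong_add cong_mult cong_refl)

theorem corollary2p7:
  fixes a b c :: nat
  assumes "a > 0" "b > 0" "c > 0" "odd (a * b)" "even c"
  shows "infinite {n :: nat. practical (a * n^2 + b * n + c)}"
proof -
  have oa: "odd a" "odd b" using assms(4) by auto
  define k where "k = 2*a"
  define D :: int where "D = int b^2 - 4*int a*int c"
  define E :: int where "E = D * int k^2 - 1"
  define d where "d = nat \<bar>E\<bar>"
  have k0: "k > 0" using assms(1) k_def by simp
  have Dodd: "odd D" unfolding D_def using oa by simp
  have E2: "E = int (2*a*k) * D - 1" unfolding E_def k_def by (simp add: power2_eq_square algebra_simps)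
  have Eodd: "odd E" unfolding E_def k_def by (simp add: power2_eq_square)
  have intd: "int d = \<bar>E\<bar>" unfolding d_def by simp
  have dodd: "odd d" using Eodd intd by (metis dvd_abs_iff even_of_nat)
  have copE: "coprime (int (2*a*k)) E"
  proof -
    have "gcd (int (2*a*k)) E dvd 1"
    proof -
      have "gcd (int (2*a*k)) E dvd int (2*a*k) * D" by simp
      moreover have "gcd (int (2*a*k)) E dvd E" by simp
      ultimately have "gcd (int (2*a*k)) E dvd int (2*a*k) * D - E" by (rule dvd_diff)
      thus ?thesis using E2 by simp
    qed
    thus ?thesis by (simp add: coprime_iff_gcd_eq_1)
  qed
  have copd: "coprime (2*a*k) d"
    using copE intd by (metis coprime_abs_right_iff coprime_int_iff)
  have Dne: "\<bar>D\<bar> \<ge> 1" using Dodd by (cases "D = 0") auto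
  have "\<bar>E\<bar> \<ge> \<bar>D\<bar> * int k^2 - 1" unfolding E_def by (simp add: abs_mult)
  moreover have "\<bar>D\<bar> * int k^2 \<ge> int k^2" using mult_right_mono[OF Dne, of "int k^2"] by simp
  ultimately have "\<bar>E\<bar> + 1 \<ge> int k^2" by linarith
  hence "int (d + 1) \<ge> int (4*a^2)" using intd unfolding k_def by (simp add: power2_eq_square)
  hence dk2: "d + 1 \<ge> 4*a^2" by linarith
  have a1: "a \<ge> 1" using assms(1) by simp
  have "a^2 \<ge> 1" using a1 by simp
  have d3: "d \<ge> 3*a^2" using dk2 \<open>a^2 \<ge> 1\<close> by linarith
  have "3*a^2 \<ge> 3" using \<open>a^2 \<ge> 1\<close> by simp
  have "d*d \<ge> (3*a^2)*(3*a^2)" using mult_le_mono[OF d3 d3] by simp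
  moreover have "(3*a^2)*(3*a^2) \<ge> a*k^2 + 2"
  proof -
    have "a*k^2 = 4*a*a^2" unfolding k_def by (simp add: power2_eq_square)
    moreover have "a*a^2 \<le> a^2*a^2" using a1 by (simp add: power2_eq_square)
    moreover have "a^2*a^2 \<ge> 1" using mult_le_mono[OF \<open>a^2 \<ge> 1\<close> \<open>a^2 \<ge> 1\<close>] by simp
    ultimately show ?thesis by linarith
  qed
  ultimately have dk: "a*k^2+2 \<le> d^2" by (simp add: power2_eq_square)
  have "a \<le> a^2" using a1 by (simp add: power2_eq_square)
  hence da: "a + 1 \<le> d" using d3 \<open>a^2 \<ge> 1\<close> by linarith
  have d0: "d > 0" using da by simp
  have dvdf: "d dvd a*m^2+b*m+c" if h: "d dvd (2*a*m+b)*k+1" for m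
  proof -
    define X :: int where "X = int ((2*a*m+b)*k+1)"
    have EX: "E dvd X" using h intd unfolding X_def by (metis abs_dvd_iff int_dvd_int_iff)
    have id: "int (2*a*k)^2 * int (a*m^2+b*m+c) = int a * (X*(X-2) - E)"
      unfolding X_def E_def D_def k_def by (simp add: power2_eq_square algebra_simps)
    have "E dvd X*(X-2) - E" using EX by (simp add: dvd_diff)
    hence "E dvd int (2*a*k)^2 * int (a*m^2+b*m+c)" unfolding id by simp
    moreover have "coprime E (int (2*a*k)^2)" using copE by (simp add: coprime_commute)
    ultimately have "E dvd int (a*m^2+b*m+c)" using coprime_dvd_mult_right_iff by blast
    thus ?thesis using intd by (metis abs_dvd_iff int_dvd_int_iff)
  qed
  obtain u where u: "[2*a*k*u = 1] (mod d)" using cong_solve_coprime_nat[OF copd] by auto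
  define r1 where "r1 = u*((d-1)*(b*k+1))"
  have "(2*a*r1+b)*k+1 = (2*a*k*u)*((d-1)*(b*k+1)) + (b*k+1)"
    unfolding r1_def by (simp add: algebra_simps)
  moreover have "[(2*a*k*u)*((d-1)*(b*k+1)) + (b*k+1) = 1*((d-1)*(b*k+1)) + (b*k+1)] (mod d)"
    using u by (intro cong_add cong_mult cong_refl)
  moreover have "1*((d-1)*(b*k+1)) + (b*k+1) = d*(b*k+1)" using d0 by (cases d) auto
  ultimately have "[(2*a*r1+b)*k+1 = d*(b*k+1)] (mod d)" by simp
  hence r1: "d dvd (2*a*r1+b)*k+1" by (simp add: cong_dvd_iff cong_sym)
  define C0 where "C0 = a*k^2+b*k+1"
  define K where "K = d + b + c + C0"
  have K2: "K < 2^K" by simp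
  obtain r2 where r2: "2^K dvd a*r2^2+b*r2+c" using hensel2[OF oa assms(5)] by blast
  have cop2: "coprime ((2::nat)^K) d" using dodd by simp
  obtain x where x: "[x = r2] (mod 2^K)" "[x = r1] (mod d)"
    using binary_chinese_remainder_nat[OF cop2] by blast
  define M where "M = 2^K * d"
  define m0 where "m0 = x mod M"
  have M0: "M > 0" unfolding M_def using d0 by simp
  have m0M: "m0 < M" unfolding m0_def using M0 by simp
  have c1: "[m0 = x] (mod 2^K)" unfolding m0_def M_def cong_def by (simp add: mod_mod_cancel)
  have c2: "[m0 = x] (mod d)" unfolding m0_def M_def cong_def by (simp add: mod_mod_cancel)
  have "[m0 = r2] (mod 2^K)" using c1 x(1) by (rule cong_trans)
  hence p2: "2^K dvd a*m0^2+b*m0+c" using r2 fcong cong_dvd_iff by blast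
  have "[m0 = r1] (mod d)" using c2 x(2) by (rule cong_trans)
  hence dB0: "d dvd (2*a*m0+b)*k+1" using r1 lcong cong_dvd_iff by blast
  have dN0: "d dvd a*m0^2+b*m0+c" using dvdf[OF dB0] .
  have "2^K * d dvd a*m0^2+b*m0+c" using p2 dN0 cop2 by (rule divides_mult)
  then obtain R where R: "a*m0^2+b*m0+c = 2^K*d*R" by blast
  have fpos: "a*m0^2+b*m0+c > 0" using assms(3) by simp
  hence R1: "R \<ge> 1" using R by (cases R) auto
  have "a*m0^2+b*m0+c \<le> a*M^2+b*M+c" using m0M
    by (intro add_le_mono mult_le_mono power_mono) auto
  also have "\<dots> \<le> a*M^2 + M*M"
  proof -
    have "2^K \<le> M" unfolding M_def using d0 by simp
    hence bcM: "b + c \<le> M" using K2 unfolding K_def by linarith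
    have "c \<le> c*M" using M0 by simp
    hence "b*M + c \<le> (b+c)*M" by (simp add: algebra_simps)
    also have "\<dots> \<le> M*M" using bcM by (rule mult_le_mono1)
    finally have "b*M + c \<le> M*M" .
    thus ?thesis by simp
  qed
  also have "\<dots> = (a+1)*(M*M)" by (simp add: power2_eq_square algebra_simps)
  also have "\<dots> \<le> d*(M*M)" using da by (rule mult_le_mono1)
  finally have "M*R \<le> M*(d*M)" using R unfolding M_def by (simp add: algebra_simps)
  hence "R \<le> d*M" using M0 by simp
  hence Rle: "R \<le> 2^K*d*d + 1" unfolding M_def by (simp add: algebra_simps)
  have "d \<le> 2^K + 1" using K2 unfolding K_def by linarith
  have P1: "practical (2^K*d)" by (rule practical_mult[OF practical_pow2]) (use d0 \<open>d \<le> 2^K + 1\<close> in auto)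
  have "1*d \<le> 2^K*d" by (rule mult_le_mono1) simp
  hence "d \<le> 2^K*d + 1" by linarith
  have P2: "practical (2^K*d*d)" by (rule practical_mult[OF P1]) (use d0 \<open>d \<le> 2^K*d + 1\<close> in auto)
  have P3: "practical (2^K*d*d*R)" by (rule practical_mult[OF P2 R1 Rle])
  hence P3': "practical ((a*m0^2+b*m0+c) * d)" using R by (simp add: algebra_simps)
  have "2^K \<le> a*m0^2+b*m0+c" using p2 fpos by (rule dvd_imp_le)
  hence C0m: "C0 \<le> a*m0^2+b*m0+c" using K2 unfolding K_def by linarith
  define I where "I = {n. practical (a*n^2+b*n+c) \<and> d dvd a*n^2+b*n+c \<and> d dvd (2*a*n+b)*k+1 \<and> C0 \<le> a*n^2+b*n+c}"
  note st0 = step[OF refl P3' dN0 dB0 C0m[unfolded C0_def] dk k0]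
  define n1 where "n1 = m0 + (a*m0^2+b*m0+c)*k"
  have "C0 \<le> a*n1^2+b*n1+c" using st0 C0m unfolding n1_def by linarith
  hence "n1 \<in> I" unfolding I_def using st0 unfolding n1_def by blast
  hence base: "\<exists>n. n \<in> I" by blast
  have nxt: "\<exists>n'. n < n' \<and> n' \<in> I" if "n \<in> I" for n
  proof -
    have h: "practical (a*n^2+b*n+c)" "d dvd a*n^2+b*n+c" "d dvd (2*a*n+b)*k+1" "C0 \<le> a*n^2+b*n+c"
      using that unfolding I_def by auto
    have "a*n^2+b*n+c > 0" using assms(3) by simp
    hence "d \<le> a*n^2+b*n+c" using h(2) by (intro dvd_imp_le)
    hence dle: "d \<le> a*n^2+b*n+c + 1" by linarith
    have "practical ((a*n^2+b*n+c) * d)" by (rule practical_mult[OF h(1) _ dle]) (use d0 in simp)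
    note st = step[OF refl this h(2) h(3) h(4)[unfolded C0_def] dk k0]
    define n' where "n' = n + (a*n^2+b*n+c)*k"
    have "C0 \<le> a*n'^2+b*n'+c" using st h(4) unfolding n'_def by linarith
    hence "n' \<in> I" unfolding I_def using st unfolding n'_def by blast
    moreover have "n < n'" using st unfolding n'_def by blast
    ultimately show ?thesis by blast
  qed
  have unb: "\<exists>n\<in>I. m \<le> n" for m
  proof (induction m)
    case 0 then show ?case using base by blast
  next
    case (Suc m)
    then obtain n where "n \<in> I" "m \<le> n" by blast
    then obtain n' where "n < n'" "n' \<in> I" using nxt by blast
    then show ?case using \<open>m \<le> n\<close> by (intro bexI[of _ n']) auto
  qed
  have "infinite I" using unb unfolding infinite_nat_iff_unbounded_le by blast
  moreover have "I \<subseteq> {n. practical (a*n^2+b*n+c)}" unfolding I_def by auto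
  ultimately show ?thesis using infinite_super by blast
qed


end
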